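(* Define transition probabilities $P(n\searrow m)$ on $\mathbb{N}_{\ge1}=\{2,3,4,\dots\}$ as follows. If $n$ is composite and not a prime power, set $P(n\searrow n/q)=\frac{\Lambda(q)}{\log n}$ for every divisor $q>1$ of $n$, and $P(n\searrow m)=0$ for all other $m$. If $n=p$ is prime, set $P(p\searrow p)=1$ and $P(p\searrow m)=0$ for $m\ne p$. If $n=p^k$ with $p$ prime and $k\ge2$, set $P(n\searrow n/p^j)=\frac1k$ for $j=1,\dots,k-2$, $P(n\searrow p)=\frac2k$, and $P(n\searrow m)=0$ for all other $m$. Let $\nu_0(n)=\frac{1}{n\log n}$. Then for every $m\in\mathbb{N}_{\ge1}$, $$\sum_{q>1}\nu_0(mq)\,P(mq\searrow m)\le\nu_0(m).$$
   Context: $\Lambda$ is the von Mangoldt function: $\Lambda(q)=\log p$ if $q=p^j$ for a prime $p$ and $j\ge1$, and $\Lambda(q)=0$ otherwise. The sum is over integers $q\ge2$. *)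

theory Defs
  imports "HOL-Analysis.Analysis" "HOL-Number_Theory.Number_Theory"
begin

text \<open>Transition probabilities P(n \<searrow> m) on the integers n \<ge> 2.
  Values for n < 2 are irrelevant and set to 0.\<close>
definition trans_prob :: "nat \<Rightarrow> nat \<Rightarrow> real" where
  "trans_prob n m =
     (if n < 2 then 0
      else if prime n then (if m = n then 1 else 0)
      else if primepow n then
        (let p = aprimedivisor n; k = multiplicity p n in
           if m = p then 2 / real k
           else if (\<exists>j\<in>{1..k-2}. m = n div p ^ j) then 1 / real k
           else 0)
      else (if m dvd n \<and> n div m > 1 then mangoldt (n div m) / ln (real n) else 0))"

definition nu0 :: "nat \<Rightarrow> real" where
  "nu0 n = 1 / (real n * ln (real n))"

end

theory Submission
  imports Defs "HOL-Real_Asymp.Real_Asymp"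
begin
lemma ln2_ge: "69/100 \<le> ln (2::real)"
  using ln_approx_bounds[of 2 2] by (simp add: eval_nat_numeral)

lemma ln3_bounds: "109/100 \<le> ln (3::real)" "ln (3::real) \<le> 11/10"
  using ln_approx_bounds[of 3 3] by (simp_all add: eval_nat_numeral)

lemma frac_cross':
  fixes x y z w :: real
  assumes "0 < y" "0 < w" "x*w \<le> z*y"
  shows "x/y \<le> z/w"
  using assms by (simp add: divide_simps mult.commute)

lemma polyC:
  fixes t :: real assumes "t \<ge> 0"
  shows "(t+69/100+1/4)*((t+69/100+1/4)+69/100)*((t+69/100+1/4)+11/10)^3 \<le>
    ((t+69/100) + (t+69/100)^2/2) * (94/100*((t+69/100+1/4)+11/10)^3 + 4*(t+69/100)*(46/100*(t+69/100+1/4)+129/100)*((t+69/100+1/4)+69/100))"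
proof -
  have "0 \<le> 99340706619/62500000000 + t*(33200258277/2500000000 + t*(598743697/25000000 + t*(16309023/1000000 + t*(22319/5000 + t*(39/100)))))"
    using assms by (intro add_nonneg_nonneg mult_nonneg_nonneg) simp_all
  moreover have "((t+69/100) + (t+69/100)^2/2) * (94/100*((t+69/100+1/4)+11/10)^3 + 4*(t+69/100)*(46/100*(t+69/100+1/4)+129/100)*((t+69/100+1/4)+69/100))
     - (t+69/100+1/4)*((t+69/100+1/4)+69/100)*((t+69/100+1/4)+11/10)^3 = 99340706619/62500000000 + t*(33200258277/2500000000 + t*(598743697/25000000 + t*(16309023/1000000 + t*(22319/5000 + t*(39/100)))))"
    by (simp add: field_simps power2_eq_square power3_eq_cube)
  ultimately show ?thesis by linarith
qed

lemma polyA: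
  fixes t :: real assumes "t \<ge> 0"
  shows "(t+158/100)^3*((t+158/100)+25/36)^2 \<le> ((t+158/100)-1/4)^2*(2*((t+158/100)+25/36)^2 + (t+158/100)^3)"
proof -
  have "0 \<le> 731125091/150000000 + t*(54011077/5062500 + t*(1579889/202500 + t*(4172/2025 + t*(1/9))))"
    using assms by (intro add_nonneg_nonneg mult_nonneg_nonneg) simp_all
  moreover have "((t+158/100)-1/4)^2*(2*((t+158/100)+25/36)^2 + (t+158/100)^3) - (t+158/100)^3*((t+158/100)+25/36)^2
    = 731125091/150000000 + t*(54011077/5062500 + t*(1579889/202500 + t*(4172/2025 + t*(1/9))))"
    by (simp add: field_simps power2_eq_square power3_eq_cube)
  ultimately show ?thesis by linarith
qed

lemma frac_cross:
  fixes x y z w :: real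
  assumes "0 < y" "0 < w" "x*w \<le> z*y"
  shows "x/y \<le> z/w"
  using assms by (simp add: divide_simps mult.commute)

lemma keyC:
  fixes L :: real
  assumes L: "ln 2 \<le> L"
  defines "c \<equiv> L + 1/4"
  shows "ln 2/(c+ln 2)^3 + 2*ln 3/(3*(c+ln 3)^3) + (c + 2*ln 3)/(c+ln 3)^2
          + 1/(4*L*(L+L^2/2)) \<le> 1/L"
proof -
  define a where "a = ln (2::real)"
  define b where "b = ln (3::real)"
  have a1: "69/100 \<le> a" using ln2_ge by (simp add: a_def)
  have b1: "109/100 \<le> b" "b \<le> 11/10" using ln3_bounds by (simp_all add: b_def)
  have L1: "69/100 \<le> L" using a1 L by (simp add: a_def)
  have c1: "c = L + 1/4" by (simp add: c_def)
  have cpos: "c > 0" using L1 c1 by simp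
  define P where "P = L + L^2/2"
  have Ppos: "P > 0" using L1 by (simp add: P_def add_pos_nonneg)
  have Lpos: "L > 0" using L1 by simp
  have apos: "a > 0" using a1 by simp
  have bpos: "b > 0" using b1 by simp
  have s1a: "1/L - 1/c = 1/(4*L*c)"
  proof -
    have "1/L - 1/c = (c-L)/(L*c)" using cpos Lpos by (simp add: field_simps)
    also have "c - L = 1/4" by (simp add: c1)
    finally show ?thesis by simp
  qed
  have cb: "c + b > 0" using cpos bpos by simp
  have s1b: "1/c - (c + 2*b)/(c+b)^2 = b^2/(c*(c+b)^2)"
  proof -
    have "1/c - (c + 2*b)/(c+b)^2 = (1*(c+b)^2 - (c+2*b)*c)/(c*(c+b)^2)"
      using cpos cb by (simp add: diff_frac_eq)
    also have "1*(c+b)^2 - (c+2*b)*c = b^2" by (simp add: power2_eq_square algebra_simps)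
    finally show ?thesis .
  qed
  have s1: "1/L - (c + 2*b)/(c+b)^2 = 1/(4*L*c) + b^2/(c*(c+b)^2)"
    using s1a s1b by linarith
  have amgm: "4*a*c \<le> (c+a)^2"
  proof -
    have "0 \<le> (c-a)^2" by simp
    thus ?thesis by (simp add: power2_eq_square algebra_simps)
  qed
  have s2: "4*L*(a/(c+a)^3) \<le> L/(c*(c+a))"
  proof -
    have "4*L*(a/(c+a)^3) = (L/(c*(c+a))) * ((4*a*c)/(c+a)^2)"
    proof -
      define e where "e = c + a"
      have "e > 0" using cpos apos by (simp add: e_def)
      then have "4*L*(a/e^3) = (L/(c*e)) * ((4*a*c)/e^2)"
        using cpos by (simp add: field_simps power2_eq_square power3_eq_cube)
      then show ?thesis by (simp add: e_def)
    qed
    also have "\<dots> \<le> (L/(c*(c+a))) * 1"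
      using amgm cpos apos Lpos by (intro mult_left_mono) (simp_all add: divide_le_eq)
    finally show ?thesis by simp
  qed
  have s3: "1/c - L/(c*(c+a)) = (1/4+a)/(c*(c+a))"
  proof -
    have ca: "c + a > 0" using cpos apos by simp
    have "((c+a) - L)/(c*(c+a)) = (c+a)/(c*(c+a)) - L/(c*(c+a))"
      by (rule diff_divide_distrib)
    moreover have "(c+a)/(c*(c+a)) = 1/c" using ca by simp
    ultimately have "1/c - L/(c*(c+a)) = ((c+a) - L)/(c*(c+a))" by simp
    also have "(c+a) - L = 1/4+a" by (simp add: c1)
    finally show ?thesis .
  qed
  have s4: "94/100/(c*(c+69/100)) \<le> (1/4+a)/(c*(c+a))"
  proof -
    have "94/100*(c*(c+a)) \<le> (1/4+a)*(c*(c+69/100))"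
    proof -
      have d0: "0 \<le> a - 69/100" using a1 by simp
      have hc: "1/4 \<le> c" using c1 L1 by simp
      have m1: "(1/4)*(a-69/100) \<le> c*(a-69/100)" by (rule mult_right_mono[OF hc d0])
      have m2: "c*((1/4)*(a-69/100)) \<le> c*(c*(a-69/100))" using cpos by (intro mult_left_mono[OF m1]) simp
      have "(1/4+a)*(c*(c+69/100)) - 94/100*(c*(c+a)) = c*(c*(a-69/100)) - c*((1/4)*(a-69/100))"
        by (simp add: field_simps)
      then show ?thesis using m2 by linarith
    qed
    then show ?thesis using cpos apos by (intro frac_cross) simp_all
  qed
  have X1: "94/100/(c*(c+69/100)) \<le> 1/c - 4*L*(a/(c+a)^3)"
    using s2 s3 s4 by linarith
  have s5: "b^2/(c*(c+b)^2) - 2*b/(3*(c+b)^3) = (b*(b*c + b^2 - 2*c/3))/(c*(c+b)^3)"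
  proof -
    define e where "e = c + b"
    have "e > 0" using cpos bpos by (simp add: e_def)
    then have "b^2/(c*e^2) - 2*b/(3*e^3) = (b*(b*e - 2*c/3))/(c*e^3)"
      using cpos by (simp add: field_simps power2_eq_square power3_eq_cube)
    moreover have "b*e - 2*c/3 = b*c + b^2 - 2*c/3" by (simp add: e_def power2_eq_square algebra_simps)
    ultimately show ?thesis by (simp add: e_def)
  qed
  have s6: "(46/100*c+129/100)/(c*(c+11/10)^3) \<le> (b*(b*c + b^2 - 2*c/3))/(c*(c+b)^3)"
  proof (rule frac_le)
    have "b*(b*c + b^2 - 2*c/3) = (b*b - 2*b/3)*c + b*b*b" by (simp add: algebra_simps power2_eq_square)
    moreover have "b*b - 2*b/3 \<ge> 46/100"
    proof -
      have "b*(b-2/3) \<ge> 109/100 * (109/100-2/3)" using b1 by (intro mult_mono) simp_all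
      then show ?thesis by (simp add: algebra_simps)
    qed
    moreover have "b*b*b \<ge> 129/100"
    proof -
      have "b*b \<ge> 109/100 * (109/100)" using b1 by (intro mult_mono) simp_all
      hence "b*b*b \<ge> (109/100 * (109/100))*(109/100)" using b1 by (intro mult_mono) simp_all
      then show ?thesis by simp
    qed
    ultimately show "46/100*c+129/100 \<le> b*(b*c + b^2 - 2*c/3)"
      using cpos by (smt (verit) mult_right_mono)
    show "0 \<le> b*(b*c + b^2 - 2*c/3)"
      using \<open>46/100*c+129/100 \<le> b*(b*c + b^2 - 2*c/3)\<close> cpos by linarith
    show "0 < c*(c+b)^3" using cpos bpos by simp
    show "c*(c+b)^3 \<le> c*(c+11/10)^3"
      using cpos bpos b1 by (intro mult_left_mono power_mono) simp_all
  qed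
  have X2: "4*L*((46/100*c+129/100)/(c*(c+11/10)^3)) \<le> 4*L*(b^2/(c*(c+b)^2) - 2*b/(3*(c+b)^3))"
    unfolding s5 using s6 Lpos by (intro mult_left_mono) simp_all
  have pc: "c*(c+69/100)*(c+11/10)^3 \<le> P * (94/100*(c+11/10)^3 + 4*L*(46/100*c+129/100)*(c+69/100))"
    using polyC[of "L - 69/100"] L1 by (simp add: c1 P_def)
  have s7: "1/P \<le> 94/100/(c*(c+69/100)) + 4*L*((46/100*c+129/100)/(c*(c+11/10)^3))"
  proof -
    have "94/100/(c*(c+69/100)) + 4*L*((46/100*c+129/100)/(c*(c+11/10)^3))
        = (94/100*(c+11/10)^3 + 4*L*(46/100*c+129/100)*(c+69/100)) / (c*(c+69/100)*(c+11/10)^3)"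
    proof -
      define u where "u = c + 69/100"
      define z where "z = c + 11/10"
      have "u > 0" "z > 0" using cpos by (simp_all add: u_def z_def)
      then have "94/100/(c*u) + 4*L*((46/100*c+129/100)/(c * z^3))
        = (94/100 * z^3 + 4*L*(46/100*c+129/100)*u) / (c * u * z^3)"
        using cpos by (simp add: field_simps)
      then show ?thesis by (simp add: u_def z_def)
    qed
    moreover have "1/P \<le> (94/100*(c+11/10)^3 + 4*L*(46/100*c+129/100)*(c+69/100)) / (c*(c+69/100)*(c+11/10)^3)"
    proof (rule frac_cross)
      show "0 < P" by (rule Ppos)
      show "0 < c*(c+69/100)*(c+11/10)^3" using cpos by simp
      show "1 * (c*(c+69/100)*(c+11/10)^3) \<le> (94/100*(c+11/10)^3 + 4*L*(46/100*c+129/100)*(c+69/100)) * P"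
        using pc by (simp add: mult.commute)
    qed
    ultimately show ?thesis by simp
  qed
  have main: "1/P \<le> (1/c - 4*L*(a/(c+a)^3)) + 4*L*(b^2/(c*(c+b)^2) - 2*b/(3*(c+b)^3))"
    using s7 X1 X2 by linarith
  define G2 where "G2 = a/(c+a)^3"
  define H where "H = b^2/(c*(c+b)^2) - 2*b/(3*(c+b)^3)"
  have m: "(1/(4*L)) * (1/P) \<le> (1/(4*L)) * ((1/c - 4*L*G2) + 4*L*H)"
    using main Lpos unfolding G2_def H_def by (intro mult_left_mono) simp_all
  have e1: "(1/(4*L)) * ((1/c - 4*L*G2) + 4*L*H) = 1/(4*L*c) - G2 + H"
    using Lpos by (simp add: ring_distribs)
  have e2: "(1/(4*L)) * (1/P) = 1/(4*L*P)" by simp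
  have fin: "a/(c+a)^3 + 2*b/(3*(c+b)^3) + (c + 2*b)/(c+b)^2 + 1/(4*L*P) \<le> 1/L"
    using m e1 e2 s1 unfolding G2_def H_def by linarith
  then show ?thesis by (simp add: a_def b_def P_def)
qed

definition Wf :: "real \<Rightarrow> real \<Rightarrow> real" where "Wf c y = 2/(y*(c+ln y)^3)"
definition Af :: "real \<Rightarrow> real \<Rightarrow> real" where "Af c y = 1/(c+ln y)^2"
definition Bf :: "real \<Rightarrow> real \<Rightarrow> real" where "Bf c y = (c+2*ln y)/(c+ln y)^2"
definition gf :: "real \<Rightarrow> real \<Rightarrow> real" where "gf c y = ln y * Wf c y"

lemma cl_pos: "c > 0 \<Longrightarrow> 1 \<le> y \<Longrightarrow> 0 < c + ln (y::real)"
proof -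
  assume "c > 0" "1 \<le> y"
  moreover from \<open>1 \<le> y\<close> have "0 \<le> ln y" by (rule ln_ge_zero)
  ultimately show ?thesis by linarith
qed

lemma Wf_nonneg: "c > 0 \<Longrightarrow> 1 \<le> y \<Longrightarrow> 0 \<le> Wf c y"
  unfolding Wf_def using cl_pos[of c y] by (intro divide_nonneg_pos mult_pos_pos) auto

lemma gf_nonneg: "c > 0 \<Longrightarrow> 1 \<le> y \<Longrightarrow> 0 \<le> gf c y"
  unfolding gf_def using Wf_nonneg by simp

lemma Bf_nonneg: "c > 0 \<Longrightarrow> 1 \<le> y \<Longrightarrow> 0 \<le> Bf c y"
  unfolding Bf_def using cl_pos[of c y] ln_ge_zero[of y] by (intro divide_nonneg_pos) auto

lemma Af_mono: "c > 0 \<Longrightarrow> 1 \<le> x \<Longrightarrow> x \<le> z \<Longrightarrow> Af c z \<le> Af c x"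
  unfolding Af_def using cl_pos[of c x] cl_pos[of c z]
  by (intro divide_left_mono power_mono mult_pos_pos) auto

lemma A1:
  assumes c: "c > 0" and x: "1 \<le> x" and xz: "x \<le> z"
  shows "Af c x - Af c z \<le> (z - x) * Wf c x"
proof -
  define X where "X = c + ln x"
  define Y where "Y = c + ln z"
  have X0: "X > 0" using cl_pos[OF c x] by (simp add: X_def)
  have XY: "X \<le> Y" using x xz by (simp add: X_def Y_def)
  have Y0: "Y > 0" using X0 XY by simp
  have d1: "Y - X \<le> (z - x)/x"
  proof -
    have "Y - X = ln (z/x)" using x xz by (simp add: X_def Y_def ln_div)
    also have "\<dots> \<le> z/x - 1" using x xz by (intro ln_le_minus_one) simp
    also have "z/x - 1 = (z-x)/x" using x by (simp add: field_simps)
    finally show ?thesis .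
  qed
  have d2: "(Y+X)/(X^2*Y^2) \<le> 2/X^3"
  proof (rule frac_cross')
    show "0 < X^2*Y^2" using X0 Y0 by simp
    show "0 < X^3" using X0 by simp
    have "(Y+X)*X \<le> 2*Y*Y"
    proof -
      have "(Y+X)*X \<le> (Y+Y)*Y" using X0 XY by (intro mult_mono) simp_all
      then show ?thesis by simp
    qed
    then have "(Y+X)*X*(X^2) \<le> 2*Y*Y*(X^2)" by (intro mult_right_mono) simp_all
    then show "(Y+X)*X^3 \<le> 2*(X^2*Y^2)" by (simp add: power2_eq_square power3_eq_cube algebra_simps)
  qed
  have "Af c x - Af c z = (Y - X)*((Y+X)/(X^2*Y^2))"
    using X0 Y0 by (simp add: Af_def X_def[symmetric] Y_def[symmetric] field_simps power2_eq_square)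
  also have "\<dots> \<le> ((z-x)/x) * (2/X^3)"
    using d1 d2 XY X0 Y0 by (intro mult_mono) simp_all
  also have "\<dots> = (z - x) * Wf c x" using x by (simp add: Wf_def X_def)
  finally show ?thesis .
qed

lemma A2:
  fixes L q :: real
  assumes L: "ln 2 \<le> L" and q: "2 \<le> q"
  defines "c \<equiv> L + 1/4"
  shows "1/(q*(L+ln q)^2) \<le> Wf c q + Af c (2*q)/q"
proof -
  define x where "x = c + ln q"
  define \<alpha> where "\<alpha> = (25/36::real)"
  have a1: "69/100 \<le> ln (2::real)" by (rule ln2_ge)
  have a2: "ln (2::real) \<le> \<alpha>" using ln2_le_25_over_36 by (simp add: \<alpha>_def)
  have lq: "ln 2 \<le> ln q" using q by simp
  have x1: "158/100 \<le> x" using a1 lq L by (simp add: x_def c_def)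
  have xpos: "x > 0" using x1 by simp
  have pA: "x^3*(x+\<alpha>)^2 \<le> (x-1/4)^2*(2*(x+\<alpha>)^2 + x^3)"
    using polyA[of "x - 158/100"] x1 by (simp add: \<alpha>_def)
  have xm: "x - 1/4 > 0" using x1 by simp
  have xa: "x + \<alpha> > 0" using x1 by (simp add: \<alpha>_def)
  have s1: "1/(x-1/4)^2 \<le> (2*(x+\<alpha>)^2 + x^3)/(x^3*(x+\<alpha>)^2)"
    using pA xm xpos xa by (intro frac_cross') (simp_all add: mult.commute)
  have s2: "(2*(x+\<alpha>)^2 + x^3)/(x^3*(x+\<alpha>)^2) = 2/x^3 + 1/(x+\<alpha>)^2"
    using xpos xa by (simp add: field_simps)
  have s3: "1/(x+\<alpha>)^2 \<le> 1/(x + ln 2)^2"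
    using a2 xpos a1 by (intro divide_left_mono power_mono mult_pos_pos) simp_all
  have s4: "1/(x-1/4)^2 \<le> 2/x^3 + 1/(x + ln 2)^2" using s1 s2 s3 by linarith
  have e1: "L + ln q = x - 1/4" by (simp add: x_def c_def)
  have e2: "c + ln (2*q) = x + ln 2" using q by (simp add: x_def ln_mult)
  have "1/(q*(L+ln q)^2) = (1/(x-1/4)^2)/q" by (simp add: e1)
  also have "\<dots> \<le> (2/x^3 + 1/(x + ln 2)^2)/q" using s4 q by (intro divide_right_mono) simp_all
  also have "\<dots> = Wf c q + Af c (2*q)/q"
    by (simp add: Wf_def Af_def e2 x_def[symmetric] add_divide_distrib)
  finally show ?thesis .
qed

lemma gf_antimono:
  assumes c: "c > 0" and x: "exp 1 \<le> x" and xy: "x \<le> y"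
  shows "gf c y \<le> gf c x"
proof -
  have "1 + 1 \<le> exp (1::real)" by (rule exp_ge_add_one_self)
  then have x1: "1 \<le> x" using x by linarith
  have y1: "1 \<le> y" using x1 xy by simp
  have eq: "\<And>t. t > 0 \<Longrightarrow> gf c t = 2 * (ln t / t) * (1/(c + ln t)^3)"
    by (simp add: gf_def Wf_def)
  have m1: "ln y / y \<le> ln x / x" by (rule ln_x_over_x_mono[OF x xy])
  have m2: "1/(c + ln y)^3 \<le> 1/(c + ln x)^3"
    using cl_pos[OF c x1] cl_pos[OF c y1] x1 xy by (intro divide_left_mono power_mono mult_pos_pos) simp_all
  have n1: "0 \<le> ln y / y" using y1 by simp
  have n2: "0 \<le> 1/(c + ln x)^3" using cl_pos[OF c x1] by simp
  have "2 * (ln y / y) * (1/(c + ln y)^3) \<le> 2 * (ln x / x) * (1/(c + ln x)^3)"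
    using m1 m2 n1 n2 cl_pos[OF c y1] by (intro mult_mono mult_left_mono) simp_all
  then show ?thesis using eq x1 y1 by simp
qed

lemma Bf_deriv:
  assumes c: "c > 0" and y: "1 \<le> y"
  shows "(Bf c has_real_derivative -(gf c y)) (at y)"
proof -
  have yp: "y > 0" using y by simp
  have cp: "c + ln y > 0" using cl_pos[OF c y] .
  have d1: "((\<lambda>t. c + 2*ln t) has_real_derivative 2/y) (at y)"
    using yp by (auto intro!: derivative_eq_intros)
  have d2: "((\<lambda>t. (c + ln t)^2) has_real_derivative 2*(c+ln y)/y) (at y)"
    using yp by (auto intro!: derivative_eq_intros)
  have nz: "(c + ln y)^2 \<noteq> 0" using cp by simp
  note d3 = DERIV_quotient[OF d1 d2 nz]
  have eq: "((2/y) * (c + ln y)^2 - (2*(c+ln y)/y) * (c + 2*ln y)) / (((c + ln y)^2) ^ Suc (Suc 0)) = -(gf c y)"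
  proof -
    define X where "X = c + ln y"
    have X0: "X > 0" using cp by (simp add: X_def)
    have cu: "c + 2*ln y = X + ln y" by (simp add: X_def)
    have n1: "(2/y) * X^2 - (2*X/y) * (X + ln y) = -(2*ln y*X)/y"
      using yp by (simp add: field_simps power2_eq_square)
    have n2: "(X^2)^Suc (Suc 0) = X * X^3" by (simp add: power2_eq_square power3_eq_cube)
    have n3: "(-(2*ln y*X)/y) / (X * X^3) = -(ln y*(2/(y*X^3)))"
      using X0 yp by simp
    have "((2/y) * X^2 - (2*X/y) * (X + ln y)) / ((X^2) ^ Suc (Suc 0)) = -(ln y*(2/(y*X^3)))"
      by (simp only: n1 n2 n3)
    then show ?thesis by (simp only: cu X_def[symmetric] gf_def Wf_def)
  qed
  show ?thesis unfolding Bf_def using d3 unfolding eq .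
qed

lemma B1:
  assumes c: "c > 0" and y: "4 \<le> y"
  shows "gf c y \<le> Bf c (y-1) - Bf c y"
proof -
  have e3: "exp 1 \<le> (3::real)" using e_less_272 by simp
  define h where "h t = Bf c t + gf c y * t" for t
  have "h y \<le> h (y-1)"
  proof (rule DERIV_nonpos_imp_nonincreasing[where f=h and a="y-1" and b=y])
    show "y - 1 \<le> y" by simp
    fix t assume t: "y - 1 \<le> t" "t \<le> y"
    have t1: "1 \<le> t" using t y by simp
    have "(h has_real_derivative (-(gf c t) + gf c y * 1)) (at t)"
      unfolding h_def by (intro DERIV_add Bf_deriv[OF c t1] DERIV_cmult DERIV_ident)
    moreover have "gf c y \<le> gf c t" using t y e3 by (intro gf_antimono[OF c]) simp_all
    ultimately show "\<exists>d. (h has_real_derivative d) (at t) \<and> d \<le> 0" by force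
  qed
  then show ?thesis by (simp add: h_def algebra_simps)
qed

lemma telA:
  assumes c: "c > 0" and q: "1 \<le> q" and jK: "1 \<le> j" "j \<le> K"
  shows "Af c (q * real j) - Af c (q * real K) \<le> q * (\<Sum>k\<in>{j..<K}. Wf c (q * real k))"
  using jK(2)
proof (induction K rule: dec_induct)
  case base
  then show ?case by simp
next
  case (step K)
  have K1: "1 \<le> real K" using step jK by simp
  have "1 * 1 \<le> q * real K" using q K1 by (intro mult_mono) simp_all
  then have x1: "1 \<le> q * real K" by simp
  have "Af c (q * real K) - Af c (q * real (Suc K)) \<le> (q * real (Suc K) - q * real K) * Wf c (q * real K)"
    using q by (intro A1[OF c x1]) (simp_all add: mult_left_mono)
  also have "(q * real (Suc K) - q * real K) = q" by (simp add: algebra_simps)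
  finally have "Af c (q * real K) - Af c (q * real (Suc K)) \<le> q * Wf c (q * real K)" .
  moreover have "(\<Sum>k\<in>{j..<Suc K}. Wf c (q * real k)) = (\<Sum>k\<in>{j..<K}. Wf c (q * real k)) + Wf c (q * real K)"
    using step by simp
  ultimately show ?case using step.IH by (simp add: algebra_simps)
qed

lemma telB:
  assumes c: "c > 0" and N: "3 \<le> N"
  shows "(\<Sum>n\<in>{4..N}. gf c (real n)) \<le> Bf c 3 - Bf c (real N)"
  using N
proof (induction N rule: dec_induct)
  case base
  then show ?case by simp
next
  case (step N)
  have "gf c (real (Suc N)) \<le> Bf c (real (Suc N) - 1) - Bf c (real (Suc N))"
    using step by (intro B1[OF c]) simp
  moreover have "(\<Sum>n\<in>{4..Suc N}. gf c (real n)) = (\<Sum>n\<in>{4..N}. gf c (real n)) + gf c (real (Suc N))"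
    using step by simp
  ultimately show ?case using step.IH by simp
qed

lemma lim_tail: "(\<lambda>K::nat. S + C * Af c (real K)) \<longlonglongrightarrow> S"
proof -
  have "(\<lambda>K::nat. C * (1/(c + ln (real K))^2)) \<longlonglongrightarrow> 0" by real_asymp
  then have "(\<lambda>K::nat. S + C * (1/(c + ln (real K))^2)) \<longlonglongrightarrow> S + 0" by (intro tendsto_add) simp_all
  then show ?thesis by (simp add: Af_def)
qed

lemma sum_gf_bound:
  assumes c: "c > 0"
  shows "(\<Sum>n\<in>{1..N}. gf c (real n)) \<le> gf c 2 + gf c 3 + Bf c 3"
proof -
  define M where "M = max 3 N"
  have M3: "3 \<le> M" by (simp add: M_def)
  have "(\<Sum>n\<in>{1..N}. gf c (real n)) \<le> (\<Sum>n\<in>{1..M}. gf c (real n))"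
    by (intro sum_mono2) (auto simp: M_def intro!: gf_nonneg[OF c])
  also have "{1..M} = {1..3} \<union> {4..M}" using M3 by auto
  also have "(\<Sum>n\<in>{1..3} \<union> {4..M}. gf c (real n)) = (\<Sum>n\<in>{1..3}. gf c (real n)) + (\<Sum>n\<in>{4..M}. gf c (real n))"
    by (intro sum.union_disjoint) auto
  also have "(\<Sum>n\<in>{1..3::nat}. gf c (real n)) = gf c 1 + gf c 2 + gf c 3"
    by (simp add: numeral_3_eq_3 numeral_2_eq_2 atLeastAtMostSuc_conv)
  also have "gf c 1 = 0" by (simp add: gf_def)
  also have "(\<Sum>n\<in>{4..M}. gf c (real n)) \<le> Bf c 3 - Bf c (real M)" by (rule telB[OF c M3])
  finally show ?thesis using Bf_nonneg[OF c, of "real M"] M3 by simp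
qed


lemma mainF:
  fixes L :: real and F :: "nat set"
  assumes L: "ln 2 \<le> L" and F: "finite F" "F \<subseteq> {2..}"
  shows "(\<Sum>q\<in>F. mangoldt q / (real q * (L + ln (real q))^2))
           \<le> gf (L+1/4) 2 + gf (L+1/4) 3 + Bf (L+1/4) 3"
proof -
  define c where "c = L + 1/4"
  have l2: "0 < ln (2::real)" by simp
  have c: "c > 0" unfolding c_def using L l2 by linarith
  define S where "S = gf c 2 + gf c 3 + Bf c 3"
  define C where "C = (\<Sum>q\<in>F. mangoldt q / real q)"
  obtain Q where Q: "\<forall>q\<in>F. q \<le> Q" using F(1) finite_nat_set_iff_bounded_le by auto
  have key: "(\<Sum>q\<in>F. mangoldt q / (real q * (L + ln (real q))^2)) \<le> S + C * Af c (real K)"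
    if K: "2 \<le> K" for K
  proof -
    define N where "N = Q * K"
    have step1: "mangoldt q / (real q * (L + ln (real q))^2) \<le>
        mangoldt q * (\<Sum>k\<in>{1..<K}. Wf c (real q * real k)) + mangoldt q / real q * Af c (real K)"
      if q: "q \<in> F" for q
    proof -
      have q2: "2 \<le> real q" using q F by auto
      have a: "1/(real q * (L + ln (real q))^2) \<le> Wf c (real q) + Af c (2 * real q)/real q"
        using A2[OF L q2] by (simp add: c_def)
      have b: "Af c (real q * real 2) - Af c (real q * real K) \<le> real q * (\<Sum>k\<in>{2..<K}. Wf c (real q * real k))"
        using telA[OF c _ _ K, of "real q"] q2 by simp
      have sp: "(\<Sum>k\<in>{1..<K}. Wf c (real q * real k)) = Wf c (real q) + (\<Sum>k\<in>{2..<K}. Wf c (real q * real k))"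
      proof -
        have "{1..<K} = insert 1 {2..<K}" using K by auto
        then show ?thesis by simp
      qed
      have mono: "Af c (real q * real K) \<le> Af c (real K)"
      proof (rule Af_mono[OF c])
        show "1 \<le> real K" using K by simp
        have "1 * real K \<le> real q * real K" using q2 by (intro mult_right_mono) simp_all
        then show "real K \<le> real q * real K" by simp
      qed
      have b2: "Af c (2 * real q)/real q \<le> (\<Sum>k\<in>{2..<K}. Wf c (real q * real k)) + Af c (real K)/real q"
      proof -
        have "Af c (2 * real q) \<le> real q * (\<Sum>k\<in>{2..<K}. Wf c (real q * real k)) + Af c (real K)"
          using b mono by (simp add: mult.commute)
        then have "Af c (2 * real q)/real q \<le> (real q * (\<Sum>k\<in>{2..<K}. Wf c (real q * real k)) + Af c (real K))/real q"
          using q2 by (intro divide_right_mono) simp_all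
        also have "\<dots> = (\<Sum>k\<in>{2..<K}. Wf c (real q * real k)) + Af c (real K)/real q"
          using q2 by (simp add: add_divide_distrib)
        finally show ?thesis .
      qed
      have "1/(real q * (L + ln (real q))^2) \<le> (\<Sum>k\<in>{1..<K}. Wf c (real q * real k)) + Af c (real K)/real q"
        using a b2 sp by linarith
      then have "mangoldt q * (1/(real q * (L + ln (real q))^2)) \<le>
          mangoldt q * ((\<Sum>k\<in>{1..<K}. Wf c (real q * real k)) + Af c (real K)/real q)"
        by (intro mult_left_mono mangoldt_nonneg)
      then show ?thesis by (simp add: ring_distribs)
    qed
    have step2: "(\<Sum>q\<in>F. mangoldt q * (\<Sum>k\<in>{1..<K}. Wf c (real q * real k))) \<le> (\<Sum>n\<in>{1..N}. gf c (real n))"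
    proof -
      have "(\<Sum>q\<in>F. mangoldt q * (\<Sum>k\<in>{1..<K}. Wf c (real q * real k)))
          \<le> (\<Sum>q\<in>F. \<Sum>n\<in>{n\<in>{1..N}. q dvd n}. mangoldt q * Wf c (real n))"
      proof (intro sum_mono)
        fix q assume q: "q \<in> F"
        have q0: "q > 0" using q F by auto
        have "(\<Sum>k\<in>{1..<K}. Wf c (real q * real k)) = (\<Sum>n\<in>(\<lambda>k. q*k)`{1..<K}. Wf c (real n))"
          using q0 by (subst sum.reindex) (auto simp: inj_on_def)
        also have "\<dots> \<le> (\<Sum>n\<in>{n\<in>{1..N}. q dvd n}. Wf c (real n))"
        proof (intro sum_mono2)
          show "finite {n\<in>{1..N}. q dvd n}" by simp
          show "(\<lambda>k. q*k)`{1..<K} \<subseteq> {n\<in>{1..N}. q dvd n}"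
          proof
            fix n assume "n \<in> (\<lambda>k. q*k)`{1..<K}"
            then obtain k where k: "k \<in> {1..<K}" "n = q*k" by auto
            have "q * k \<le> Q * K" using Q q k by (intro mult_le_mono) auto
            moreover have "1 \<le> q * k" using q0 k by simp
            ultimately show "n \<in> {n\<in>{1..N}. q dvd n}" using k by (simp add: N_def)
          qed
          show "\<And>b. b \<in> {n\<in>{1..N}. q dvd n} - (\<lambda>k. q*k)`{1..<K} \<Longrightarrow> 0 \<le> Wf c (real b)"
            by (intro Wf_nonneg[OF c]) auto
        qed
        finally have "mangoldt q * (\<Sum>k\<in>{1..<K}. Wf c (real q * real k)) \<le> mangoldt q * (\<Sum>n\<in>{n\<in>{1..N}. q dvd n}. Wf c (real n))"
          by (intro mult_left_mono mangoldt_nonneg)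
        then show "mangoldt q * (\<Sum>k\<in>{1..<K}. Wf c (real q * real k)) \<le> (\<Sum>n\<in>{n\<in>{1..N}. q dvd n}. mangoldt q * Wf c (real n))"
          by (simp add: sum_distrib_left)
      qed
      also have "\<dots> = (\<Sum>n\<in>{1..N}. \<Sum>q\<in>{q\<in>F. q dvd n}. mangoldt q * Wf c (real n))"
        by (rule sum.swap_restrict) (simp_all add: F)
      also have "\<dots> \<le> (\<Sum>n\<in>{1..N}. gf c (real n))"
      proof (intro sum_mono)
        fix n assume n: "n \<in> {1..N}"
        have n0: "n \<noteq> 0" using n by simp
        have "(\<Sum>q\<in>{q\<in>F. q dvd n}. mangoldt q * Wf c (real n)) = (\<Sum>q\<in>{q\<in>F. q dvd n}. mangoldt q) * Wf c (real n)"
          by (simp add: sum_distrib_right)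
        also have "\<dots> \<le> (\<Sum>d | d dvd n. mangoldt d) * Wf c (real n)"
        proof (intro mult_right_mono sum_mono2)
          show "finite {d. d dvd n}" using n0 by simp
          show "{q\<in>F. q dvd n} \<subseteq> {d. d dvd n}" by auto
          show "\<And>b. b \<in> {d. d dvd n} - {q\<in>F. q dvd n} \<Longrightarrow> 0 \<le> (mangoldt b :: real)" by (rule mangoldt_nonneg)
          show "0 \<le> Wf c (real n)" using n by (intro Wf_nonneg[OF c]) auto
        qed
        also have "(\<Sum>d | d dvd n. mangoldt d) = ln (real n)" using mangoldt_sum[OF n0, where 'a=real] by simp
        finally show "(\<Sum>q\<in>{q\<in>F. q dvd n}. mangoldt q * Wf c (real n)) \<le> gf c (real n)"
          by (simp add: gf_def)
      qed
      finally show ?thesis .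
    qed
    have "(\<Sum>q\<in>F. mangoldt q / (real q * (L + ln (real q))^2)) \<le>
        (\<Sum>q\<in>F. mangoldt q * (\<Sum>k\<in>{1..<K}. Wf c (real q * real k)) + mangoldt q / real q * Af c (real K))"
      by (intro sum_mono step1)
    also have "\<dots> = (\<Sum>q\<in>F. mangoldt q * (\<Sum>k\<in>{1..<K}. Wf c (real q * real k))) + C * Af c (real K)"
      by (simp add: sum.distrib C_def sum_distrib_right)
    also have "\<dots> \<le> S + C * Af c (real K)"
      using step2 sum_gf_bound[OF c, of N] by (simp add: S_def)
    finally show ?thesis .
  qed
  have "(\<Sum>q\<in>F. mangoldt q / (real q * (L + ln (real q))^2)) \<le> S"
    by (rule LIMSEQ_le_const[OF lim_tail]) (use key in auto)
  then show ?thesis by (simp add: S_def c_def)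
qed

lemma trans_prob_nonneg: "0 \<le> trans_prob n m"
  unfolding trans_prob_def Let_def
  by (auto intro!: divide_nonneg_nonneg mangoldt_nonneg)

lemma nu0_pos: "2 \<le> n \<Longrightarrow> 0 < nu0 n"
  unfolding nu0_def by (intro divide_pos_pos mult_pos_pos) auto

lemma term_bound:
  fixes m q :: nat
  assumes m: "2 \<le> m" and q: "2 \<le> q"
  defines "\<psi> \<equiv> mangoldt q / (real (m*q) * ln (real (m*q))^2)"
  shows "nu0 (m*q) * trans_prob (m*q) m \<le> \<psi> + (if prime m \<and> primepow (m*q) then \<psi> else 0)"
proof -
  define n where "n = m * q"
  have n4: "4 \<le> n" using mult_le_mono[OF m q] by (simp add: n_def)
  have nnp: "\<not> prime n"
  proof
    assume "prime n"
    moreover have "m dvd n" by (simp add: n_def)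
    ultimately have "m = 1 \<or> m = n" by (simp add: prime_nat_iff)
    then show False using m q by (auto simp: n_def)
  qed
  have lnpos: "0 < ln (real n)" using n4 by simp
  have nu: "nu0 n = 1/(real n * ln (real n))" by (simp add: nu0_def)
  have psi: "\<psi> = mangoldt q / (real n * ln (real n)^2)" by (simp add: \<psi>_def n_def)
  have psi0: "0 \<le> \<psi>" unfolding psi using n4 by (intro divide_nonneg_nonneg mangoldt_nonneg) simp_all
  show ?thesis
  proof (cases "primepow n")
    case True
    then obtain P K where P: "prime P" and K: "K > 0" and nPK: "n = P^K"
      by (auto simp: primepow_def)
    have P1: "1 < P" using P by (rule prime_gt_1_nat)
    have apd: "aprimedivisor n = P" using P K by (simp add: nPK aprimedivisor_prime_power)
    have mult: "multiplicity P n = K" using P by (simp add: nPK multiplicity_same_power)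
    have "m dvd P^K" by (simp add: nPK[symmetric] n_def)
    then obtain a where a: "a \<le> K" "m = P^a" using divides_primepow_nat[OF P] by auto
    have "q dvd P^K" by (simp add: nPK[symmetric] n_def)
    then obtain b where b: "b \<le> K" "q = P^b" using divides_primepow_nat[OF P] by auto
    have "P^K = P^(a+b)" using nPK a b by (simp add: n_def power_add)
    then have Kab: "K = a + b" using P1 by simp
    have a1: "a \<noteq> 0"
    proof
      assume "a = 0" with a m show False by simp
    qed
    have b1: "b \<noteq> 0"
    proof
      assume "b = 0" with b q show False by simp
    qed
    have mq: "mangoldt q = ln (real P)" using P b b1 by simp
    have lnn: "ln (real n) = real K * ln (real P)" by (simp add: nPK ln_realpow)
    have lnP: "0 < ln (real P)" using P1 by simp
    have psiK: "\<psi> = 1/(real n * real K * real K * ln (real P))"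
      using lnP K by (simp add: psi mq lnn power2_eq_square field_simps)
    have np: "\<not> prime n" by (rule nnp)
    have tp: "trans_prob n m = (if m = P then 2 / real K
           else if (\<exists>j\<in>{1..K-2}. m = n div P ^ j) then 1 / real K else 0)"
      using n4 np True by (simp add: trans_prob_def Let_def apd mult)
    show ?thesis
    proof (cases "a = 1")
      case True
      have mP: "m = P" using a True by simp
      have "nu0 n * trans_prob n m = 2 * (1/(real n * real K * real K * ln (real P)))"
        using tp mP nu lnn by (simp add: field_simps)
      moreover have "prime m \<and> primepow (m*q)" using mP P \<open>primepow n\<close> by (simp add: n_def)
      ultimately show ?thesis by (simp add: psiK n_def mult_ac)
    next
      case False
      with a1 have a2: "2 \<le> a" by simp
      have mP: "m \<noteq> P"
      proof
        assume "m = P"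
        then have "P^a = P^1" using a by simp
        then have "a = 1" using P1 by (simp only: power_inject_exp)
        then show False using False by simp
      qed
      have ex: "\<exists>j\<in>{1..K-2}. m = n div P ^ j"
      proof
        show "b \<in> {1..K-2}" using b1 a2 Kab by auto
        show "m = n div P^b" using P1 by (simp add: n_def a b)
      qed
      have "nu0 n * trans_prob n m = 1/(real n * real K * real K * ln (real P))"
        using tp mP ex nu lnn by (simp add: field_simps)
      then show ?thesis using psi0 by (simp add: psiK n_def)
    qed
  next
    case False
    have "m dvd n" by (simp add: n_def)
    moreover have "n div m = q" using m by (simp add: n_def)
    ultimately have tp: "trans_prob n m = mangoldt q / ln (real n)"
      using n4 nnp False q by (simp add: trans_prob_def)
    have "nu0 n * trans_prob n m = \<psi>"
      using lnpos n4 by (simp add: tp nu psi power2_eq_square)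
    then show ?thesis using psi0 by (simp add: n_def)
  qed
qed

lemma geom_bound:
  fixes p :: nat and G :: "nat set"
  assumes p: "prime p" and G: "finite G" and Gp: "\<forall>q\<in>G. \<exists>i. i \<ge> 1 \<and> q = p^i"
  shows "(\<Sum>q\<in>G. 1 / real q) \<le> 1 / (real p - 1)"
proof -
  have p1: "1 < p" using p by (rule prime_gt_1_nat)
  obtain Q where Q: "\<forall>q\<in>G. q \<le> Q" using G finite_nat_set_iff_bounded_le by auto
  have sub: "G \<subseteq> (\<lambda>i. p^(Suc i)) ` {..<Q}"
  proof
    fix q assume q: "q \<in> G"
    then obtain i where i: "i \<ge> 1" "q = p^i" using Gp by auto
    have "i < 2^i" by (rule less_exp)
    also have "2^i \<le> p^i" using p1 by (intro power_mono) simp_all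
    also have "p^i \<le> Q" using Q q i by auto
    finally have "i - 1 < Q" by simp
    moreover have "q = p^(Suc (i-1))" using i by simp
    ultimately show "q \<in> (\<lambda>i. p^(Suc i)) ` {..<Q}" by blast
  qed
  have "(\<Sum>q\<in>G. 1 / real q) \<le> (\<Sum>q\<in>(\<lambda>i. p^(Suc i)) ` {..<Q}. 1 / real q)"
    by (intro sum_mono2 sub) auto
  also have "\<dots> = (\<Sum>i<Q. 1 / real (p^(Suc i)))"
  proof (subst sum.reindex)
    show "inj_on (\<lambda>i. p^(Suc i)) {..<Q}" using p1 by (auto simp: inj_on_def)
  qed simp
  also have "\<dots> = (1/real p) * (\<Sum>i<Q. (1/real p)^i)"
    by (simp add: sum_distrib_left power_divide)
  also have "\<dots> \<le> (1/real p) * (1 / (1 - 1/real p))"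
  proof (intro mult_left_mono)
    have "(\<Sum>i<Q. (1/real p)^i) = (1 - (1/real p)^Q) / (1 - 1/real p)"
      using p1 by (simp add: sum_gp_strict)
    also have "\<dots> \<le> 1 / (1 - 1/real p)"
      using p1 by (intro divide_right_mono) simp_all
    finally show "(\<Sum>i<Q. (1/real p)^i) \<le> 1 / (1 - 1/real p)" .
  qed simp
  also have "(1/real p) * (1 / (1 - 1/real p)) = 1 / (real p - 1)"
    using p1 by (simp add: field_simps)
  finally show ?thesis .
qed

lemma extra_bound:
  fixes p :: nat and F :: "nat set"
  assumes p: "prime p" and F: "finite F" "F \<subseteq> {2..}"
  shows "(\<Sum>q\<in>F. if primepow (p*q) then mangoldt q / (real (p*q) * ln (real (p*q))^2) else 0)
           \<le> 1 / (real p * (4 * ln (real p) * (real p - 1)))"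
proof -
  have p1: "1 < p" using p by (rule prime_gt_1_nat)
  define L where "L = ln (real p)"
  have L0: "0 < L" using p1 by (simp add: L_def)
  define G where "G = {q\<in>F. primepow (p*q)}"
  have G: "finite G" using F by (simp add: G_def)
  have struct: "\<exists>i. i \<ge> 1 \<and> q = p^i" if q: "q \<in> G" for q
  proof -
    from q obtain P K where P: "prime P" "K > 0" "p*q = P^K" by (auto simp: G_def primepow_def)
    have "p dvd P^K" by (simp add: P(3)[symmetric])
    then have "p dvd P" using p P by (simp add: prime_dvd_power_iff)
    then have pP: "p = P" using p P by (simp add: primes_dvd_imp_eq)
    have "q dvd p^K" by (simp add: pP P(3)[symmetric])
    then obtain i where i: "q = p^i" using divides_primepow_nat[OF p] by auto
    have "i \<noteq> 0"
    proof
      assume "i = 0" with i q F show False by (auto simp: G_def)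
    qed
    then have "i \<ge> 1" by simp
    then show ?thesis using i by blast
  qed
  have pt: "mangoldt q / (real (p*q) * ln (real (p*q))^2) \<le> (1/(4*real p*L)) * (1 / real q)"
    if q: "q \<in> G" for q
  proof -
    obtain i where i: "i \<ge> 1" "q = p^i" using struct[OF q] by auto
    have mq: "mangoldt q = L" using p i by (simp add: L_def)
    have qp: "real p \<le> real q" using i p1 by (simp add: self_le_power)
    have lq: "L \<le> ln (real q)" using qp p1 by (simp add: L_def)
    have lpq: "ln (real (p*q)) = L + ln (real q)" using p1 i by (simp add: L_def ln_mult)
    have "2*L \<le> ln (real (p*q))" using lpq lq by simp
    then have sq: "(2*L)^2 \<le> ln (real (p*q))^2" using L0 by (intro power_mono) simp_all
    have q0: "0 < real q" using qp p1 by simp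
    have "1 * 1 < real p * real q" using p1 qp by (intro mult_strict_mono) simp_all
    then have pq1: "1 < real p * real q" by simp
    have "mangoldt q / (real (p*q) * ln (real (p*q))^2) \<le> L / (real (p*q) * (2*L)^2)"
      unfolding mq using sq L0 q0 p1 pq1 by (intro divide_left_mono mult_left_mono mult_pos_pos) simp_all
    also have "\<dots> = (1/(4*real p*L)) * (1 / real q)"
      using L0 by (simp add: field_simps power2_eq_square)
    finally show ?thesis .
  qed
  have "(\<Sum>q\<in>F. if primepow (p*q) then mangoldt q / (real (p*q) * ln (real (p*q))^2) else 0)
      = (\<Sum>q\<in>G. mangoldt q / (real (p*q) * ln (real (p*q))^2))"
    unfolding G_def by (rule sum.inter_filter[OF F(1), symmetric])
  also have "\<dots> \<le> (\<Sum>q\<in>G. (1/(4*real p*L)) * (1 / real q))"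
    by (intro sum_mono pt)
  also have "\<dots> = (1/(4*real p*L)) * (\<Sum>q\<in>G. 1 / real q)"
    by (simp add: sum_distrib_left)
  also have "\<dots> \<le> (1/(4*real p*L)) * (1 / (real p - 1))"
    using geom_bound[OF p G] struct L0 by (intro mult_left_mono) auto
  also have "\<dots> = 1 / (real p * (4 * ln (real p) * (real p - 1)))"
    by (simp add: L_def)
  finally show ?thesis .
qed

lemma S_eq: "gf c 2 + gf c 3 + Bf c 3 = ln 2/(c+ln 2)^3 + 2*ln 3/(3*(c+ln 3)^3) + (c + 2*ln 3)/(c+ln 3)^2"
  by (simp add: gf_def Wf_def Bf_def)

theorem lemma5p1:
  fixes m :: nat
  assumes "m \<ge> 2"
  shows "(\<lambda>q. nu0 (m * q) * trans_prob (m * q) m) summable_on {2..}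
     \<and> (\<Sum>\<^sub>\<infinity>q\<in>{2..}. nu0 (m * q) * trans_prob (m * q) m) \<le> nu0 m"
proof -
  have m2: "2 \<le> m" by (rule assms)
  define T where "T q = nu0 (m*q) * trans_prob (m*q) m" for q
  define L where "L = ln (real m)"
  have L2: "ln 2 \<le> L" using m2 by (simp add: L_def)
  have L0: "0 < L" using m2 by (simp add: L_def)
  define c where "c = L + 1/4"
  have nn: "0 \<le> T q" if q: "q \<in> {2..}" for q
  proof -
    have "2 \<le> m * q" using m2 q by (metis atLeast_iff le_trans mult_le_mono1 mult_2 le_add1 mult.commute)
    then show ?thesis unfolding T_def using nu0_pos trans_prob_nonneg
      by (intro mult_nonneg_nonneg) (simp_all add: less_imp_le)
  qed
  have bound: "sum T F \<le> nu0 m" if F: "finite F" "F \<subseteq> {2..}" for F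
  proof -
    define \<psi> where "\<psi> q = mangoldt q / (real (m*q) * ln (real (m*q))^2)" for q
    define E where "E q = (if prime m \<and> primepow (m*q) then \<psi> q else 0)" for q
    have "sum T F \<le> (\<Sum>q\<in>F. \<psi> q + E q)"
    proof (intro sum_mono)
      fix q assume "q \<in> F"
      then have q: "2 \<le> q" using F by auto
      show "T q \<le> \<psi> q + E q" unfolding T_def \<psi>_def E_def by (rule term_bound[OF m2 q])
    qed
    also have "\<dots> = sum \<psi> F + sum E F" by (rule sum.distrib)
    finally have t1: "sum T F \<le> sum \<psi> F + sum E F" .
    have psi_eq: "\<psi> q = (1/real m) * (mangoldt q / (real q * (L + ln (real q))^2))" if "q \<in> F" for q
    proof -
      have q0: "0 < q" using that F by auto
      have "ln (real (m*q)) = L + ln (real q)" using m2 q0 by (simp add: L_def ln_mult)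
      then show ?thesis by (simp add: \<psi>_def)
    qed
    have s1: "sum \<psi> F \<le> (1/real m) * (gf c 2 + gf c 3 + Bf c 3)"
    proof -
      have "sum \<psi> F = (1/real m) * (\<Sum>q\<in>F. mangoldt q / (real q * (L + ln (real q))^2))"
        using psi_eq by (simp add: sum_distrib_left)
      also have "\<dots> \<le> (1/real m) * (gf c 2 + gf c 3 + Bf c 3)"
        using mainF[OF L2 F] by (intro mult_left_mono) (simp_all add: c_def)
      finally show ?thesis .
    qed
    have P0: "0 < L + L^2/2" using L0 by (simp add: add_pos_nonneg)
    have s2: "sum E F \<le> (1/real m) * (1/(4*L*(L+L^2/2)))"
    proof (cases "prime m")
      case True
      have "sum E F = (\<Sum>q\<in>F. if primepow (m*q) then mangoldt q / (real (m*q) * ln (real (m*q))^2) else 0)"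
        unfolding E_def \<psi>_def using True by simp
      also have "\<dots> \<le> 1 / (real m * (4 * ln (real m) * (real m - 1)))"
        by (rule extra_bound[OF True F])
      also have "\<dots> \<le> (1/real m) * (1/(4*L*(L+L^2/2)))"
      proof -
        have "1 + L + L^2/2 \<le> exp L" using L0 by (intro exp_lower_Taylor_quadratic) simp
        also have "exp L = real m" using m2 by (simp add: L_def)
        finally have mL: "L + L^2/2 \<le> real m - 1" by simp
        have "1 / (real m * (4 * L * (real m - 1))) \<le> 1 / (real m * (4 * L * (L + L^2/2)))"
          using mL P0 L0 m2 by (intro divide_left_mono mult_left_mono mult_pos_pos) simp_all
        then show ?thesis by (simp add: L_def)
      qed
      finally show ?thesis .
    next
      case False
      then have "sum E F = 0" by (simp add: E_def)
      then show ?thesis using P0 L0 m2 by simp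
    qed
    have key: "gf c 2 + gf c 3 + Bf c 3 + 1/(4*L*(L+L^2/2)) \<le> 1/L"
      using keyC[OF L2] by (simp add: S_eq c_def)
    have "sum T F \<le> (1/real m) * (gf c 2 + gf c 3 + Bf c 3 + 1/(4*L*(L+L^2/2)))"
      using t1 s1 s2 by (simp add: ring_distribs)
    also have "\<dots> \<le> (1/real m) * (1/L)"
      using key m2 by (intro mult_left_mono) simp_all
    also have "\<dots> = nu0 m" by (simp add: nu0_def L_def)
    finally show ?thesis .
  qed
  have summ: "T summable_on {2..}"
  proof (rule nonneg_bdd_above_summable_on)
    show "\<And>x. x \<in> {2..} \<Longrightarrow> 0 \<le> T x" by (rule nn)
    show "bdd_above (sum T ` {F. F \<subseteq> {2..} \<and> finite F})"
      using bound by (intro bdd_aboveI[where M="nu0 m"]) auto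
  qed
  have "infsum T {2..} \<le> nu0 m"
    using summ bound by (intro infsum_le_finite_sums) auto
  then show ?thesis using summ unfolding T_def by simp
qed

end
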